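(* Let $p$ be an odd prime and $k,m$ positive integers, and let $n$ be a positive integer dividing $p^{km}+1$ with $\frac{p^{km}+1}{n}$ odd. Let $\mathbb{F}_p(\eta)$ be an extension of $\mathbb{F}_p$ of degree $k$, and let $\sigma$ be its Frobenius automorphism. Let $g(X)$ and $h(X,\eta)$ be coprime factors of $X^n+1$ such that: (1) $g(X)$ is a factor of $X^n+1$ over $\mathbb{F}_p$ with $g(-X)=g(X)$, and $g$ is divisible by every irreducible factor of $X^n+1$ over $\mathbb{F}_p$ whose degree is not divisible by $k$; (2) $h(X,\eta)$ is a factor of $\frac{X^n+1}{g}$ over $\mathbb{F}_p(\eta)$ with $h(-X,\eta)=h(X,\eta)$, such that for every irreducible factor $r(X,\eta)$ of $\frac{X^n+1}{g}$ over $\mathbb{F}_p(\eta)$, $r$ divides $h$ if and only if none of $\sigma^i(r)$, $i=1,\dots,k-1$, divides $h$; i.e. $\frac{X^n+1}{g}=\prod_{i=0}^{k-1}\sigma^i(h)$. Choose any nonzero $\alpha\in\mathbb{F}_p$, and let $a(X,\eta)$ be the polynomial modulo $X^n+1$ uniquely determined by the Chinese remainder theorem via $$a\equiv 1\mod g,\qquad a\equiv\sigma^i(\alpha\eta)\mod \sigma^i(h)\quad\text{for all }0\le i<k.$$ Then $a(X,\eta)$ lies in $\mathbb{F}_p[X]$ (modulo $X^n+1$), and the uniquely negacyclic subspace $S=\{(ug,\,uag): u\in\mathcal{R}\}$ of $\mathcal{R}\times\mathcal{R}\cong\mathbb{F}_p^n\times\mathbb{F}_p^n$ generated by $(g,ag)$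 is totally isotropic.
   Context: $\mathcal{R}=\mathbb{F}_p[X]/\langle X^n+1\rangle$, identified with $\mathbb{F}_p^n$ via $(a_0,\dots,a_{n-1})\mapsto\sum a_iX^i$. $\sigma$ is the Frobenius automorphism $\beta\mapsto\beta^p$ of $\mathbb{F}_p(\eta)$, extended coefficientwise to polynomials. The symplectic inner product on $\mathbb{F}_p^n\times\mathbb{F}_p^n$ is $\langle(\mathbf{a},\mathbf{b}),(\mathbf{c},\mathbf{d})\rangle_s=\mathbf{a}^T\mathbf{d}-\mathbf{b}^T\mathbf{c}$, and a subset is totally isotropic if this vanishes for all pairs of its elements. *)

theory Defs
  imports "HOL-Computational_Algebra.Computational_Algebra" "HOL-Library.Cardinality"
begin

text \<open>The prime field F_p, viewed inside a field 'a of characteristic p.\<close>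
definition Fp :: "'a::field set" where
  "Fp = range of_nat"

definition poly_over_Fp :: "'a::field poly \<Rightarrow> bool" where
  "poly_over_Fp q \<longleftrightarrow> (\<forall>i. coeff q i \<in> Fp)"

definition Fp_adjoin :: "'a::field \<Rightarrow> 'a set" where
  "Fp_adjoin eta = {poly q eta | q. poly_over_Fp q}"

definition irreducible_over_Fp :: "'a::field poly \<Rightarrow> bool" where
  "irreducible_over_Fp q \<longleftrightarrow> poly_over_Fp q \<and> degree q > 0 \<and>
     (\<forall>r s. poly_over_Fp r \<and> poly_over_Fp s \<and> q = r * s \<longrightarrow> degree r = 0 \<or> degree s = 0)"

definition Xn1 :: "nat \<Rightarrow> 'a::field poly" where
  "Xn1 n = monom 1 n + 1"

definition frob :: "nat \<Rightarrow> nat \<Rightarrow> 'a::field poly \<Rightarrow> 'a poly" where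
  "frob p i r = map_poly (\<lambda>x. x ^ (p ^ i)) r"

definition neg_var :: "'a::field poly \<Rightarrow> 'a poly" where
  "neg_var q = pcompose q [:0, -1:]"

text \<open>Coefficient vector in F_p^n of an element of R = F_p[X]/(X^n+1).\<close>
definition vecR :: "nat \<Rightarrow> 'a::field poly \<Rightarrow> nat \<Rightarrow> 'a" where
  "vecR n q j = coeff (q mod Xn1 n) j"

definition symp :: "nat \<Rightarrow> ((nat \<Rightarrow> 'a::field) \<times> (nat \<Rightarrow> 'a)) \<Rightarrow> ((nat \<Rightarrow> 'a) \<times> (nat \<Rightarrow> 'a)) \<Rightarrow> 'a" where
  "symp n x y = (\<Sum>j<n. fst x j * snd y j) - (\<Sum>j<n. snd x j * fst y j)"

definition totally_isotropic :: "nat \<Rightarrow> ((nat \<Rightarrow> 'a::field) \<times> (nat \<Rightarrow> 'a)) set \<Rightarrow> bool" where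
  "totally_isotropic n S \<longleftrightarrow> (\<forall>x\<in>S. \<forall>y\<in>S. symp n x y = 0)"

definition neg_subspace :: "nat \<Rightarrow> 'a::field poly \<Rightarrow> 'a poly \<Rightarrow> ((nat \<Rightarrow> 'a) \<times> (nat \<Rightarrow> 'a)) set" where
  "neg_subspace n g a = {(vecR n (u * g), vecR n (u * a * g)) | u. poly_over_Fp u}"

end

theory Submission
  imports Defs
begin



lemma dvd_pow_diff: "(x - y) dvd (x ^ n - y ^ (n::nat) :: 'b::comm_ring_1)"
proof (induction n)
  case (Suc n)
  have "x ^ Suc n - y ^ Suc n = x * (x ^ n - y ^ n) + (x - y) * y ^ n"
    by (simp add: algebra_simps)
  thus ?case using Suc by simp
qed simp

lemma char_eq: assumes "prime p" "of_nat p = (0::'a::field)" shows "CHAR('a) = p"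
proof -
  have "CHAR('a) dvd p" using assms(2) of_nat_eq_0_iff_char_dvd by blast
  with assms(1) have "CHAR('a) = 1 \<or> CHAR('a) = p" using prime_nat_iff by blast
  thus ?thesis by auto
qed

lemma frob_coeff: assumes "prime p" shows "coeff (frob p i f) n = coeff f n ^ (p ^ i)"
  unfolding frob_def using assms by (subst coeff_map_poly) (auto simp: prime_gt_0_nat)

lemma frob_add: assumes "prime p" "of_nat p = (0::'a::field)"
  shows "frob p i (f + g :: 'a poly) = frob p i f + frob p i g"
  by (rule poly_eqI) (simp add: frob_coeff[OF assms(1)] freshmans_dream' char_eq[OF assms] assms)

lemma frob_mult: assumes "prime p" "of_nat p = (0::'a::field)"
  shows "frob p i (f * g :: 'a poly) = frob p i f * frob p i g"
  by (rule poly_eqI) (simp add: frob_coeff[OF assms(1)] coeff_mult freshmans_dream_sum' char_eq[OF assms] assms power_mult_distrib)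

lemma frob_const: assumes "prime p" shows "frob p i [:c:] = [:c ^ (p ^ i):]"
  by (rule poly_eqI) (auto simp: frob_coeff[OF assms] coeff_pCons prime_gt_0_nat assms split: nat.splits)

lemma frob_neg_one: assumes "prime p" "of_nat p = (0::'a::field)"
  shows "(-1::'a) ^ (p ^ i) = -1"
proof -
  have "(1 + -1::'a) ^ (p^i) = 1 ^ (p^i) + (-1) ^ (p^i)"
    by (rule freshmans_dream') (simp_all add: char_eq[OF assms] assms)
  moreover have "(0::'a) ^ (p^i) = 0" using assms by (simp add: prime_gt_0_nat)
  ultimately show ?thesis by (simp add: eq_neg_iff_add_eq_0 add.commute)
qed

lemma frob_minus: assumes "prime p" "of_nat p = (0::'a::field)"
  shows "frob p i (- f :: 'a poly) = - frob p i f"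
  by (rule poly_eqI) (simp add: frob_coeff[OF assms(1)] power_minus[of "coeff f _"] frob_neg_one[OF assms])

lemma frob_diff: assumes "prime p" "of_nat p = (0::'a::field)"
  shows "frob p i (f - g :: 'a poly) = frob p i f - frob p i g"
  using frob_add[OF assms, of i f "-g"] frob_minus[OF assms] by simp

lemma frob_one: "frob p i (1::'a::field poly) = 1"
  unfolding frob_def by simp

lemma frob_comp: assumes "prime p" shows "frob p i (frob p j f) = frob p (i + j) (f::'a::field poly)"
  by (rule poly_eqI) (simp add: frob_coeff[OF assms] power_add mult.commute flip: power_mult)

lemma frob_0: "frob p 0 f = (f::'a::field poly)"
  unfolding frob_def by simp

lemma frob_dvd: assumes "prime p" "of_nat p = (0::'a::field)" "(a::'a poly) dvd b"
  shows "frob p i a dvd frob p i b"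
  using assms(3) by (auto simp: frob_mult[OF assms(1,2)] elim!: dvdE)


lemma fermat_field:
  fixes x :: "'a :: {field,finite}"
  shows   "x ^ card (UNIV :: 'a set) = x"
proof (cases "x = 0")
  case False
  have "x * (\<Prod>y\<in>UNIV-{0}. x * y) = x * x ^ (card (UNIV :: 'a set) - 1) * \<Prod>(UNIV-{0})"
    by (simp add: prod.distrib mult_ac)
  also have "x * x ^ (card (UNIV :: 'a set) - 1) = x ^ Suc (card (UNIV :: 'a set) - 1)"
    by (subst power_Suc) auto
  also have "Suc (card (UNIV :: 'a set) - 1) = card (UNIV :: 'a set)"
    using finite_UNIV_card_ge_0[where ?'a = 'a] by simp
  also have "(\<Prod>y\<in>UNIV-{0}. x * y) = (\<Prod>y\<in>UNIV-{0}. y)"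
    by (rule prod.reindex_bij_witness[of _ "\<lambda>y. y / x" "\<lambda>y. x * y"]) (use False in auto)
  finally show ?thesis
    by simp
qed (use finite_UNIV_card_ge_0[where ?'a = 'a] in auto)

lemma fermat_pow:
  fixes x :: "'a :: {field,finite}"
  assumes "CARD('a) = p ^ k" shows "x ^ (p ^ (k * j)) = x"
proof (induction j)
  case (Suc j)
  have "x ^ (p ^ (k * Suc j)) = (x ^ (p ^ (k * j))) ^ (p ^ k)"
    by (simp add: power_add power_mult mult.commute flip: power_mult)
  also have "\<dots> = x" using Suc fermat_field[of x] assms by simp
  finally show ?case .
qed simp

lemma fermat_pow1:
  fixes x :: "'a :: {field,finite}"
  assumes "CARD('a) = p ^ k" shows "x ^ (p ^ k) = x"
  using fermat_pow[OF assms, of x 1] by simp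

lemma ofnat_frob: assumes "prime p" "of_nat p = (0::'a::field)"
  shows "(of_nat j :: 'a) ^ (p ^ i) = of_nat j"
proof (induction j)
  case 0 thus ?case using assms by (simp add: prime_gt_0_nat)
next
  case (Suc j)
  have "(of_nat j + 1 :: 'a) ^ (p ^ i) = of_nat j ^ (p^i) + 1 ^ (p ^ i)"
    by (rule freshmans_dream') (simp_all add: char_eq[OF assms] assms)
  thus ?case using Suc by (simp add: add.commute)
qed

lemma Fp_frob: assumes "prime p" "of_nat p = (0::'a::field)" "poly_over_Fp (f::'a poly)"
  shows "frob p i f = f"
proof (rule poly_eqI)
  fix n
  from assms(3) obtain j where "coeff f n = of_nat j" unfolding poly_over_Fp_def Fp_def by blast
  thus "coeff (frob p i f) n = coeff f n" by (simp add: frob_coeff[OF assms(1)] ofnat_frob[OF assms(1,2)])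
qed

lemma fixed_Fp: assumes "prime p" "of_nat p = (0::'a::field)" "(x::'a) ^ p = x"
  shows "x \<in> Fp"
proof -
  define P :: "'a poly" where "P = monom 1 p - [:0,1:]"
  have p2: "p \<ge> 2" using assms(1) prime_ge_2_nat by blast
  have cP: "coeff P p = 1" using p2 by (simp add: P_def coeff_pCons split: nat.splits)
  hence P0: "P \<noteq> 0" by auto
  have dP: "degree P \<le> p" unfolding P_def
    by (rule degree_diff_le) (use p2 in \<open>auto simp: degree_monom_le intro: order.trans[OF degree_monom_le]\<close>)
  let ?R = "{x. poly P x = 0}"
  have roots: "poly P y = 0 \<longleftrightarrow> y ^ p = y" for y by (simp add: P_def poly_monom)
  have fin: "finite ?R" using poly_roots_finite[OF P0] .
  have cR: "card ?R \<le> p" using card_poly_roots_bound[OF P0] dP by linarith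
  have sub: "of_nat ` {..<p} \<subseteq> ?R" using roots ofnat_frob[OF assms(1,2), of _ 1] by auto
  have inj: "inj_on (of_nat :: nat \<Rightarrow> 'a) {..<p}"
  proof (rule inj_onI)
    fix a b assume ab: "a \<in> {..<p}" "b \<in> {..<p}" "(of_nat a::'a) = of_nat b"
    have "(of_nat (b - a) :: 'a) = 0" if "a \<le> b" "(of_nat a::'a) = of_nat b" for a b
      using that by (simp add: of_nat_diff)
    hence "p dvd (b - a) \<and> p dvd (a - b)" using ab
      by (metis of_nat_eq_0_iff_char_dvd char_eq[OF assms(1,2)] nat_le_linear diff_is_0_eq dvd_0_right)
    thus "a = b" using ab by (metis dvd_imp_le le_antisym lessThan_iff diff_is_0_eq not_less zero_less_diff less_imp_diff_less)

  qed
  have "card (of_nat ` {..<p} :: 'a set) = p" using card_image[OF inj] by simp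
  hence "of_nat ` {..<p} = ?R" using card_subset_eq[OF fin sub] cR by (metis card_mono fin le_antisym sub)
  hence "x \<in> of_nat ` {..<p}" using roots assms(3) by blast
  thus ?thesis unfolding Fp_def by auto
qed

lemma neg_var_coeff: "coeff (neg_var q) i = (-1) ^ i * coeff (q::'a::field poly) i"
  unfolding neg_var_def
proof (induction q arbitrary: i)
  case (pCons a q)
  show ?case
    by (cases i) (simp_all add: pcompose_pCons coeff_pCons pCons.IH)
qed simp

lemma frob_neg_var: assumes "prime p" "of_nat p = (0::'a::field)"
  shows "frob p i (neg_var q) = neg_var (frob p i (q::'a poly))"
proof (rule poly_eqI)
  fix j
  have "((-1::'a) ^ j) ^ (p ^ i) = ((-1) ^ (p ^ i)) ^ j" by (metis power_mult mult.commute)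
  also have "\<dots> = (-1) ^ j" using frob_neg_one[OF assms] by simp
  finally have e: "((-1::'a) ^ j) ^ (p ^ i) = (-1) ^ j" .
  show "coeff (frob p i (neg_var q)) j = coeff (neg_var (frob p i q)) j"
    by (simp only: frob_coeff[OF assms(1)] neg_var_coeff power_mult_distrib e)
qed


lemma degree_Xn1: "n > 0 \<Longrightarrow> degree (Xn1 n :: 'a::field poly) = n"
  unfolding Xn1_def by (subst degree_add_eq_left) (auto simp: degree_monom_eq)

lemma Xn1_nz: "n > 0 \<Longrightarrow> Xn1 n \<noteq> (0 :: 'a::field poly)"
  using degree_Xn1[of n] by (metis degree_0 less_numeral_extra(3))

lemma Xn1_over: "n > 0 \<Longrightarrow> poly_over_Fp (Xn1 n :: 'a::field poly)"
  unfolding poly_over_Fp_def Fp_def Xn1_def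
proof
  fix i assume "n > 0"
  show "coeff (monom 1 n + 1 :: 'a poly) i \<in> range of_nat"
    by (cases "i = n"; cases "i = 0") (use \<open>n > 0\<close> in \<open>auto simp: coeff_monom intro: range_eqI[of _ _ 1] range_eqI[of _ _ 0]\<close>)
qed

lemma Xn1_sqf: assumes "n > 0" "of_nat n \<noteq> (0::'a::field)"
  shows "squarefree (Xn1 n :: 'a poly)"
proof (rule squarefreeI)
  fix x :: "'a poly" assume "x ^ 2 dvd Xn1 n"
  then obtain s where s0: "Xn1 n = x ^ 2 * s" by (rule dvdE)
  have s: "Xn1 n = x * (x * s)" unfolding s0 power2_eq_square by (rule mult.assoc)
  have d1: "x dvd Xn1 n" using s by simp
  have "pderiv (Xn1 n) = x * pderiv (x * s) + (x * s) * pderiv x"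
    unfolding s by (rule pderiv_mult)
  also have "\<dots> = x * pderiv (x * s) + x * (s * pderiv x)" by (simp only: mult.assoc)
  finally have d2: "x dvd pderiv (Xn1 n :: 'a poly)"
    by (simp only: dvd_add dvd_triv_left)
  have pd: "pderiv (Xn1 n :: 'a poly) = monom (of_nat n) (n - 1)"
    unfolding Xn1_def by (simp only: pderiv_add pderiv_monom) simp
  obtain n' where n': "n = Suc n'" using assms(1) by (cases n) auto
  have e1: "smult (of_nat n) (Xn1 n) = monom (of_nat n) n + [:of_nat n :: 'a:]"
    unfolding Xn1_def by (simp add: smult_add_right smult_monom)
  have e2: "[:0,1:] * monom (of_nat n) (n - 1) = (monom (of_nat n) n :: 'a poly)"
    unfolding n' by (simp add: monom_Suc)
  have "smult (of_nat n) (Xn1 n) - [:0,1:] * pderiv (Xn1 n) = [:of_nat n :: 'a:]"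
    unfolding pd e1 e2 by simp
  moreover have "x dvd smult (of_nat n) (Xn1 n) - [:0,1:] * pderiv (Xn1 n)"
    by (rule dvd_diff[OF dvd_smult[OF d1] dvd_mult[OF d2]])
  ultimately have "x dvd [:of_nat n:]" by simp
  moreover have "is_unit [:of_nat n :: 'a:]" using assms(2) by (simp add: is_unit_const_poly_iff dvd_field_iff)
  ultimately show "x dvd 1" by (rule dvd_unit_imp_unit)
qed




lemma bezout_poly:
  fixes a b :: "'a::field poly"
  assumes "coprime a b"
  shows "\<exists>s t. s * a + t * b = 1"
proof -
  define I where "I = {s * a + t * b | s t. True} - {0}"
  have "a \<noteq> 0 \<or> b \<noteq> 0" using assms by auto
  moreover have "a = 1 * a + 0 * b" "b = 0 * a + 1 * b" by simp_all
  ultimately have "a \<in> I \<or> b \<in> I" unfolding I_def by blast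
  hence ne: "I \<noteq> {}" by auto
  obtain d where dI: "d \<in> I" and dmin: "\<And>e. e \<in> I \<Longrightarrow> degree d \<le> degree e"
    using ex_has_least_nat[of "\<lambda>e. e \<in> I" _ degree] ne by blast
  obtain s0 t0 where d: "d = s0 * a + t0 * b" "d \<noteq> 0" using dI unfolding I_def by blast
  have dv: "d dvd x" if "x = s1 * a + t1 * b" for x s1 t1
  proof (rule ccontr)
    assume nd: "\<not> d dvd x"
    hence r0: "x mod d \<noteq> 0" by (simp add: dvd_eq_mod_eq_0)
    have "x mod d = x - (x div d) * d" by (simp add: minus_div_mult_eq_mod)
    also have "\<dots> = (s1 - (x div d) * s0) * a + (t1 - (x div d) * t0) * b"
      using that d by (simp add: algebra_simps)
    finally have "x mod d \<in> I" using r0 unfolding I_def by blast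
    hence "degree d \<le> degree (x mod d)" by (rule dmin)
    moreover have "degree (x mod d) < degree d" using degree_mod_less'[OF d(2) r0] .
    ultimately show False by simp
  qed
  have "d dvd a" by (rule dv[of _ 1 0]) simp
  moreover have "d dvd b" by (rule dv[of _ 0 1]) simp
  ultimately have "is_unit d" using assms by (simp add: coprime_def)
  then obtain c where c: "d = [:c:]" "c dvd 1" using is_unit_poly_iff by blast
  hence "c \<noteq> 0" by auto
  have "smult (inverse c) d = 1" using c \<open>c \<noteq> 0\<close> by simp
  hence "(smult (inverse c) s0) * a + (smult (inverse c) t0) * b = 1"
    using d by (simp add: smult_add_right)
  thus ?thesis by blast
qed

lemma irr_prime:
  fixes r a b :: "'a::field poly"
  assumes "irreducible r" "r dvd a * b" "\<not> r dvd a"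
  shows "r dvd b"
proof -
  have "coprime r a"
  proof (rule coprimeI)
    fix c assume c: "c dvd r" "c dvd a"
    then obtain e where e: "r = c * e" by (auto elim: dvdE)
    hence "is_unit c \<or> is_unit e" using assms(1) by (simp add: irreducible_def)
    moreover have "\<not> is_unit e"
    proof
      assume "is_unit e"
      hence "r dvd c" using e by (simp add: mult_unit_dvd_iff)
      hence "r dvd a" using c(2) by (rule dvd_trans)
      with assms(3) show False ..
    qed
    ultimately show "is_unit c" by blast
  qed
  then obtain s t where "s * r + t * a = 1" using bezout_poly by blast
  hence "b = (s * r + t * a) * b" by simp
  also have "\<dots> = r * (s * b) + t * (a * b)" by (simp add: algebra_simps)
  finally have b: "b = r * (s * b) + t * (a * b)" .
  have "r dvd r * (s * b) + t * (a * b)" by (rule dvd_add[OF dvd_triv_left dvd_mult[OF assms(2)]])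
  thus ?thesis using b by simp
qed

lemma irr_factor_exists:
  fixes x :: "'a::field poly"
  assumes "x \<noteq> 0" "\<not> is_unit x"
  shows "\<exists>r. irreducible r \<and> r dvd x"
  using assms
proof (induction "degree x" arbitrary: x rule: less_induct)
  case less
  show ?case
  proof (cases "irreducible x")
    case False
    then obtain y z where yz: "x = y * z" "\<not> is_unit y" "\<not> is_unit z"
      using less.prems by (auto simp: irreducible_def)
    have y0: "y \<noteq> 0" "z \<noteq> 0" using yz less.prems by auto
    have "degree z > 0" using yz(3) y0 is_unit_iff_degree by blast
    hence "degree y < degree x" using degree_mult_eq[OF y0] yz(1) by simp
    then obtain r where "irreducible r" "r dvd y" using less.hyps y0 yz by blast
    thus ?thesis using yz(1) by auto
  qed auto
qed

lemma sqf_dvd_aux: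
  fixes D F :: "'a::field poly"
  shows "degree D = d \<Longrightarrow> D \<noteq> 0 \<Longrightarrow> (\<And>x. x ^ 2 dvd D \<Longrightarrow> is_unit x) \<Longrightarrow>
    (\<And>r. irreducible r \<Longrightarrow> r dvd D \<Longrightarrow> r dvd F) \<Longrightarrow> D dvd F"
proof (induction d arbitrary: D F rule: less_induct)
  case (less d)
  show ?case
  proof (cases "is_unit D")
    case False
    obtain r where r: "irreducible r" "r dvd D" using irr_factor_exists[OF less.prems(2) False] by blast
    then obtain D' where D': "D = r * D'" by (auto elim: dvdE)
    obtain F' where F': "F = r * F'" using less.prems(4)[OF r] by (auto elim: dvdE)
    have r0: "r \<noteq> 0" "D' \<noteq> 0" using D' less.prems(2) by auto
    have "\<not> is_unit r" using r(1) by (simp add: irreducible_def)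
    hence "degree r > 0" using r0 is_unit_iff_degree by blast
    hence deg: "degree D' < degree D" using degree_mult_eq[OF r0] D' by simp
    have "D' dvd F'"
    proof (rule less.IH[OF _ refl r0(2)])
      show "degree D' < d" using deg less.prems(1) by simp
      show "is_unit x" if "x ^ 2 dvd D'" for x
      proof -
        have "x ^ 2 dvd r * D'" using dvd_mult[OF that, of r] .
        hence "x ^ 2 dvd D" using D' by simp
        thus ?thesis by (rule less.prems(3))
      qed
      fix r' assume r': "irreducible r'" "r' dvd D'"
      have "r' dvd r * D'" using dvd_mult[OF r'(2), of r] .
      hence "r' dvd D" using D' by simp
      hence "r' dvd F" by (rule less.prems(4)[OF r'(1)])
      hence "r' dvd r * F'" using F' by simp
      moreover have "\<not> r' dvd r"
      proof
        assume "r' dvd r"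
        then obtain c where c: "r = r' * c" by (auto elim: dvdE)
        have "\<not> is_unit r'" using r'(1) by (simp add: irreducible_def)
        moreover have "is_unit r' \<or> is_unit c" using c r(1) unfolding irreducible_def by blast
        ultimately have "is_unit c" by blast
        hence "r dvd r'" using c by (simp add: mult_unit_dvd_iff)
        hence "r dvd D'" using r'(2) by (rule dvd_trans)
        hence "r ^ 2 dvd D" using D' by (simp add: power2_eq_square)
        hence "is_unit r" by (rule less.prems(3))
        with \<open>\<not> is_unit r\<close> show False ..
      qed
      ultimately show "r' dvd F'" using irr_prime[OF r'(1)] by blast
    qed
    thus ?thesis using D' F' by simp
  qed (rule unit_imp_dvd)
qed

lemma sqf_dvd_field:
  fixes D F :: "'a::field poly"
  shows "D \<noteq> 0 \<Longrightarrow> (\<And>x. x ^ 2 dvd D \<Longrightarrow> is_unit x) \<Longrightarrow>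
    (\<And>r. irreducible r \<Longrightarrow> r dvd D \<Longrightarrow> r dvd F) \<Longrightarrow> D dvd F"
  by (rule sqf_dvd_aux[OF refl])




lemma coprime_bez: "s * a + t * b = 1 \<Longrightarrow> coprime a (b :: 'b::{comm_ring_1,algebraic_semidom})"
proof (rule coprimeI)
  fix c assume "s * a + t * b = 1" "c dvd a" "c dvd b"
  hence "c dvd s * a + t * b" by (intro dvd_add dvd_mult)
  thus "is_unit c" using \<open>s * a + t * b = 1\<close> by simp
qed

lemma coprime_mult_field:
  fixes a b c :: "'a::field poly"
  assumes "coprime a c" "coprime b c" shows "coprime (a * b) c"
proof -
  obtain s t where st: "s * a + t * c = 1" using bezout_poly[OF assms(1)] by blast
  obtain s' t' where st': "s' * b + t' * c = 1" using bezout_poly[OF assms(2)] by blast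
  have "(s * a + t * c) * (s' * b + t' * c) = 1" using st st' by simp
  hence "(s * s') * (a * b) + (t * s' * b + s * a * t' + t * t' * c) * c = 1"
    by (simp add: algebra_simps)
  thus ?thesis by (rule coprime_bez)
qed

lemma coprime_prod_field:
  fixes m :: "nat \<Rightarrow> 'a::field poly"
  shows "finite I \<Longrightarrow> (\<And>i. i \<in> I \<Longrightarrow> coprime (m i) b) \<Longrightarrow> coprime (\<Prod>i\<in>I. m i) b"
proof (induction I rule: finite_induct)
  case empty
  show ?case by (rule coprime_bez[of 1 _ 0]) simp
next
  case (insert j I)
  have "coprime (m j * (\<Prod>i\<in>I. m i)) b"
    by (rule coprime_mult_field) (use insert in auto)
  thus ?case using insert by simp
qed

lemma crt2:
  fixes M N :: "'a::field poly"
  assumes "coprime M N"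
  shows "\<exists>y. M dvd y - x \<and> N dvd y - r"
proof -
  obtain s t where st: "s * M + t * N = 1"
    using bezout_poly[OF assms] by blast
  have tN: "t * N = 1 - s * M" using st by (simp add: eq_diff_eq add.commute)
  have sM: "s * M = 1 - t * N" using st by (simp add: eq_diff_eq)
  define y where "y = x * (t * N) + r * (s * M)"
  have "y - x = (r - x) * s * M" unfolding y_def tN by (simp add: algebra_simps)
  moreover have "y - r = (x - r) * t * N" unfolding y_def sM by (simp add: algebra_simps)
  ultimately show ?thesis by (intro exI[of _ y]) simp
qed

lemma crt:
  fixes m r :: "nat \<Rightarrow> 'a::field poly"
  assumes "finite I" "\<And>i j. i \<in> I \<Longrightarrow> j \<in> I \<Longrightarrow> i \<noteq> j \<Longrightarrow> coprime (m i) (m j)"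
  shows "\<exists>x. \<forall>i\<in>I. m i dvd x - r i"
  using assms
proof (induction I rule: finite_induct)
  case (insert j I)
  then obtain x where x: "\<forall>i\<in>I. m i dvd x - r i" by blast
  have "coprime (\<Prod>i\<in>I. m i) (m j)"
    by (rule coprime_prod_field) (use insert in auto)
  then obtain y where y: "(\<Prod>i\<in>I. m i) dvd y - x" "m j dvd y - r j" using crt2 by blast
  have "m i dvd y - r i" if "i \<in> I" for i
  proof -
    have "m i dvd (\<Prod>i\<in>I. m i)" using that insert(1) by (rule dvd_prodI[rotated])
    hence "m i dvd y - x" using y(1) by (rule dvd_trans)
    moreover have "m i dvd x - r i" using x that by blast
    ultimately have "m i dvd (y - x) + (x - r i)" by (rule dvd_add)
    thus ?thesis by simp
  qed
  with y show ?case by blast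
qed simp

definition Bf :: "nat \<Rightarrow> 'a::field poly \<Rightarrow> 'a poly \<Rightarrow> 'a" where
  "Bf n A C = (\<Sum>j<n. coeff (A mod Xn1 n) j * coeff (C mod Xn1 n) j)"

lemma coeff_mod_ge: assumes "n > 0" "i \<ge> n" shows "coeff (A mod Xn1 n :: 'a::field poly) i = 0"
proof -
  have dX: "degree (Xn1 n :: 'a poly) = n" by (rule degree_Xn1[OF assms(1)])
  have "A mod Xn1 n = 0 \<or> degree (A mod Xn1 n) < degree (Xn1 n :: 'a poly)"
    using degree_mod_less[OF Xn1_nz[OF assms(1)], of A] .
  hence "A mod Xn1 n = 0 \<or> degree (A mod Xn1 n) < n" unfolding dX .
  thus ?thesis
  proof
    assume "degree (A mod Xn1 n) < n"
    hence "degree (A mod Xn1 n) < i" using assms(2) by linarith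
    thus ?thesis by (rule coeff_eq_0)
  qed simp
qed

lemma shift_mod:
  assumes "n > 0" "j < n"
  shows "coeff ((pCons 0 A) mod Xn1 n :: 'a::field poly) j =
    (if j = 0 then - coeff (A mod Xn1 n) (n - 1) else coeff (A mod Xn1 n) (j - 1))"
proof -
  define M where "M = (Xn1 n :: 'a poly)"
  define A' where "A' = A mod M"
  define c where "c = coeff A' (n - 1)"
  define W where "W = [:0,1:] * A' - smult c M"
  have cM: "coeff M i = (if i = n then 1 else 0) + (if i = 0 then 1 else 0)" for i
    unfolding M_def Xn1_def by (simp add: coeff_monom)
  have cA: "coeff A' i = 0" if "i \<ge> n" for i using coeff_mod_ge[OF assms(1) that] unfolding A'_def M_def .
  have cW: "coeff W i = (if i = 0 then 0 else coeff A' (i - 1)) - c * coeff M i" for i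
    unfolding W_def by (cases i) simp_all
  have "degree W \<le> n - 1"
  proof (rule degree_le, intro allI impI)
    fix i assume "n - 1 < i"
    thus "coeff W i = 0" using assms(1) cA[of "i - 1"] by (cases "i = n") (auto simp: cW cM c_def)
  qed
  moreover have "degree M = n" unfolding M_def by (rule degree_Xn1[OF assms(1)])
  ultimately have dW: "degree W < degree M" using assms(1) by linarith
  have "pCons 0 A = [:0,1:] * A" by simp
  hence "(pCons 0 A) mod M = ([:0,1:] * A') mod M" unfolding A'_def by (simp only: mod_mult_right_eq)
  also have "[:0,1:] * A' = W + smult c M" unfolding W_def by simp
  also have "(W + smult c M) mod M = W" by (simp add: poly_mod_add_left mod_smult_left mod_poly_less[OF dW])
  finally have "(pCons 0 A) mod M = W" .
  thus ?thesis using assms unfolding M_def[symmetric] A'_def[symmetric] c_def[symmetric]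
    by (simp add: cW cM)
qed

lemma Bf_shift: assumes "n > 0" shows "Bf n ([:0,1:] * A) ([:0,1:] * C) = Bf n A (C :: 'a::field poly)"
proof -
  obtain n' where n: "n = Suc n'" using assms by (cases n) auto
  have h0: "coeff ((pCons 0 B) mod Xn1 n) 0 = - coeff (B mod Xn1 n) n'" for B :: "'a poly"
    using shift_mod[OF assms, of 0 B] n by simp
  have hS: "coeff ((pCons 0 B) mod Xn1 n) (Suc i) = coeff (B mod Xn1 n) i" if "i < n'" for B :: "'a poly" and i
    using shift_mod[OF assms, of "Suc i" B] n that by simp
  have "Bf n ([:0,1:] * A) ([:0,1:] * C) =
     (\<Sum>j<Suc n'. coeff ((pCons 0 A) mod Xn1 n) j * coeff ((pCons 0 C) mod Xn1 n) j)"
    unfolding Bf_def n by simp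
  also have "\<dots> = coeff ((pCons 0 A) mod Xn1 n) 0 * coeff ((pCons 0 C) mod Xn1 n) 0 +
       (\<Sum>j<n'. coeff ((pCons 0 A) mod Xn1 n) (Suc j) * coeff ((pCons 0 C) mod Xn1 n) (Suc j))"
    by (rule sum.lessThan_Suc_shift)
  also have "\<dots> = coeff (A mod Xn1 n) n' * coeff (C mod Xn1 n) n' +
       (\<Sum>j<n'. coeff (A mod Xn1 n) j * coeff (C mod Xn1 n) j)"
    by (simp add: h0 hS)
  also have "\<dots> = Bf n A C" unfolding Bf_def n by simp
  finally show ?thesis .
qed

lemma Bf_cong_right: "Xn1 n dvd C1 - C2 \<Longrightarrow> Bf n A C1 = Bf n A C2"
  unfolding Bf_def by (simp add: mod_eq_dvd_iff[symmetric])

lemma Bf_sym: "Bf n A C = Bf n C A"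
  unfolding Bf_def by (simp add: mult.commute)

lemma Bf_add_right: "Bf n A (C1 + C2) = Bf n A C1 + Bf n A (C2 :: 'a::field poly)"
  unfolding Bf_def by (simp add: poly_mod_add_left algebra_simps sum.distrib)

lemma Bf_smult_right: "Bf n A (smult c C) = c * Bf n A (C :: 'a::field poly)"
  unfolding Bf_def by (simp add: mod_smult_left algebra_simps sum_distrib_left)

lemma Bf_add_left: "Bf n (C1 + C2) A = Bf n C1 A + Bf n C2 (A :: 'a::field poly)"
  by (simp only: Bf_sym[of n _ A] Bf_add_right)

lemma Bf_smult_left: "Bf n (smult c C) A = c * Bf n C (A :: 'a::field poly)"
  by (simp only: Bf_sym[of n _ A] Bf_smult_right)

lemma X_pow_2n: "Xn1 n dvd [:0,1:] * ([:0,1:] ^ (2 * n - 1) * C) - (C :: 'a::field poly)" if "n > 0"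
proof -
  let ?X = "[:0,1:] :: 'a poly"
  have mo: "monom 1 n = ?X ^ n" by (simp add: monom_altdef)
  have s: "Suc (2 * n - 1) = n + n" using that by simp
  have "?X * (?X ^ (2 * n - 1) * C) = ?X ^ Suc (2 * n - 1) * C" by (simp only: power_Suc mult.assoc)
  also have "\<dots> = ?X ^ n * ?X ^ n * C" by (simp only: s power_add)
  finally have "?X * (?X ^ (2 * n - 1) * C) - C = (?X ^ n - 1) * Xn1 n * C"
    unfolding Xn1_def mo by (simp add: algebra_simps)
  thus ?thesis by simp
qed

lemma Bf_X: assumes "n > 0"
  shows "Bf n ([:0,1:] * A) C = Bf n A ([:0,1:] ^ (2 * n - 1) * (C :: 'a::field poly))"
proof -
  have "Bf n ([:0,1:] * A) C = Bf n ([:0,1:] * A) ([:0,1:] * ([:0,1:] ^ (2 * n - 1) * C))"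
    by (rule Bf_cong_right) (use X_pow_2n[OF assms, of C] in \<open>simp add: dvd_diff_commute\<close>)
  also have "\<dots> = Bf n A ([:0,1:] ^ (2 * n - 1) * C)" by (rule Bf_shift[OF assms])
  finally show ?thesis .
qed

lemma Bf_adj: assumes "n > 0"
  shows "Bf n (f * A) C = Bf n A (pcompose f ([:0,1:] ^ (2 * n - 1)) * (C :: 'a::field poly))"
proof (induction f arbitrary: A C)
  case 0
  show ?case unfolding Bf_def by simp
next
  case (pCons a f)
  let ?Y = "[:0,1:] ^ (2 * n - 1) :: 'a poly"
  have "pCons a f * A = smult a A + [:0,1:] * (f * A)" by simp
  hence "Bf n (pCons a f * A) C = Bf n (smult a A) C + Bf n ([:0,1:] * (f * A)) C"
    by (simp only: Bf_add_left)
  also have "\<dots> = a * Bf n A C + Bf n (f * A) (?Y * C)"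
    by (simp only: Bf_smult_left Bf_X[OF assms])
  also have "\<dots> = a * Bf n A C + Bf n A (pcompose f ?Y * (?Y * C))" using pCons.IH by simp
  also have "\<dots> = Bf n A (pcompose (pCons a f) ?Y * C)"
    by (simp add: pcompose_pCons Bf_add_right Bf_smult_right algebra_simps)
  finally show ?case .
qed




lemma freshman_poly:
  assumes "prime p" "of_nat p = (0::'a::field)"
  shows "(f :: 'a poly) ^ (p ^ j) = pcompose (frob p j f) (monom 1 (p ^ j))"
proof (induction f)
  case 0
  show ?case using assms(1) by (simp add: frob_def prime_gt_0_nat)
next
  case (pCons a f)
  let ?q = "p ^ j"
  have chp: "prime CHAR('a poly)" using char_eq[OF assms] assms(1) by simp
  have e: "pCons a f = [:a:] + monom 1 1 * f" by (simp add: monom_Suc)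
  have "(pCons a f) ^ ?q = [:a:] ^ ?q + (monom 1 1 * f) ^ ?q"
    unfolding e by (rule freshmans_dream'[OF chp]) (simp add: char_eq[OF assms])
  also have "\<dots> = [:a ^ ?q:] + monom 1 ?q * f ^ ?q"
    by (simp add: poly_const_pow power_mult_distrib monom_power)
  also have "\<dots> = [:a ^ ?q:] + monom 1 ?q * pcompose (frob p j f) (monom 1 ?q)"
    using pCons.IH by simp
  also have "\<dots> = pcompose (frob p j (pCons a f)) (monom 1 ?q)"
  proof -
    have "frob p j (pCons a f) = pCons (a ^ ?q) (frob p j f)"
      unfolding frob_def using assms(1) by (subst map_poly_pCons) (auto simp: prime_gt_0_nat)
    thus ?thesis by (simp add: pcompose_pCons)
  qed
  finally show ?case .
qed

lemma pcompose_cong: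
  assumes "M dvd Y - Z" shows "M dvd pcompose f Y - pcompose (f :: 'a::field poly) Z"
proof (induction f)
  case (pCons a f)
  have "pcompose (pCons a f) Y - pcompose (pCons a f) Z =
     Y * (pcompose f Y - pcompose f Z) + (Y - Z) * pcompose f Z"
    by (simp add: pcompose_pCons algebra_simps)
  also have "M dvd \<dots>"
    by (rule dvd_add[OF dvd_mult[OF pCons.IH] dvd_mult2[OF assms]])
  finally show ?case .
qed simp

lemma frob_zero: "frob p i 0 = 0" unfolding frob_def by simp

lemma frob_irr:
  assumes "prime p" "of_nat p = (0::'a::field)" "\<And>f::'a poly. frob p k f = f" "e \<le> k"
    and "irreducible (r :: 'a poly)"
  shows "irreducible (frob p e r)"
proof -
  have inv: "frob p (k - e) (frob p e f) = f" for f :: "'a poly"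
    using frob_comp[OF assms(1), of "k - e" e f] assms(3,4) by simp
  have inv2: "frob p e (frob p (k - e) f) = f" for f :: "'a poly"
    using frob_comp[OF assms(1), of e "k - e" f] assms(3,4) by simp
  have unit: "is_unit (frob p i u)" if "is_unit u" for u :: "'a poly" and i
  proof -
    from that obtain w where "1 = u * w" by (elim dvdE)
    hence "1 = frob p i u * frob p i w" by (metis frob_one frob_mult[OF assms(1,2)])
    thus ?thesis by (rule dvdI)
  qed
  show ?thesis unfolding irreducible_def
  proof (intro conjI allI impI)
    show "frob p e r \<noteq> 0"
      using inv[of r] assms(5) by (auto simp: frob_zero)
    show "\<not> is_unit (frob p e r)"
    proof
      assume "is_unit (frob p e r)"
      hence "is_unit r" using unit[of "frob p e r" "k - e"] inv[of r] by simp
      with assms(5) show False by (simp add: irreducible_def)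
    qed
    fix x y assume xy: "frob p e r = x * y"
    have "r = frob p (k - e) x * frob p (k - e) y"
      using arg_cong[OF xy, of "frob p (k - e)"] inv[of r] by (simp add: frob_mult[OF assms(1,2)])
    hence "is_unit (frob p (k - e) x) \<or> is_unit (frob p (k - e) y)"
      using assms(5) by (simp add: irreducible_def)
    thus "is_unit x \<or> is_unit y" using unit[of _ e] inv2 by metis
  qed
qed

lemma XQ:
  fixes Q n :: nat
  assumes "n > 0" "n dvd Q + 1" "odd ((Q + 1) div n)"
  shows "Xn1 n dvd [:0,1:] ^ (2 * n - 1) + (monom 1 Q :: 'a::field poly)"
proof -
  let ?X = "[:0,1:] :: 'a poly"
  define od where "od = (Q + 1) div n"
  have Qo: "Q + 1 = n * od" using assms(2) unfolding od_def by simp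
  have mo: "monom 1 j = ?X ^ j" for j :: nat by (simp add: monom_altdef)
  have M: "Xn1 n = ?X ^ n + 1" unfolding Xn1_def mo ..
  have "?X ^ n - (-1) dvd (?X ^ n) ^ od - (-1) ^ od" by (rule dvd_pow_diff)
  hence d1: "Xn1 n dvd ?X ^ (Q + 1) + 1"
    unfolding M Qo using assms(3) unfolding od_def[symmetric] by (simp add: power_mult)
  have "?X ^ (2 * n) = ?X ^ n * ?X ^ n" by (simp only: mult_2 power_add)
  hence "?X ^ (2 * n) - 1 = (?X ^ n - 1) * Xn1 n" unfolding M
    by (simp add: algebra_simps)
  hence d2: "Xn1 n dvd ?X ^ (2 * n) - 1" by simp
  have eq: "?X * (?X ^ (2 * n - 1) + ?X ^ Q) = (?X ^ (2 * n) - 1) + (?X ^ (Q + 1) + 1)"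
    using assms(1) by (simp add: algebra_simps flip: power_Suc)
  have "Xn1 n dvd (?X ^ (2 * n) - 1) + (?X ^ (Q + 1) + 1)" by (rule dvd_add[OF d2 d1])
  hence d3: "Xn1 n dvd ?X * (?X ^ (2 * n - 1) + ?X ^ Q)" by (simp only: eq)
  have bz: "1 * Xn1 n + (uminus (?X ^ (n - 1))) * ?X = 1"
    unfolding M using assms(1) by (cases n) (simp_all add: algebra_simps)
  define W where "W = ?X ^ (2 * n - 1) + ?X ^ Q"
  have "W = Xn1 n * W + (uminus (?X ^ (n - 1))) * (?X * W)"
    using arg_cong[OF bz, of "\<lambda>z. z * W"] by (simp add: algebra_simps)
  also have "Xn1 n dvd \<dots>"
    by (rule dvd_add[OF dvd_triv_left dvd_mult[OF d3[folded W_def]]])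
  finally show ?thesis unfolding W_def mo .
qed




theorem mainTheorem10:
  fixes p k m n :: nat and eta alpha :: "'a::{field,finite}" and g h :: "'a poly"
  assumes "prime p" "odd p" "k > 0" "m > 0" "n > 0"
    and "n dvd p ^ (k * m) + 1" "odd ((p ^ (k * m) + 1) div n)"
    and "of_nat p = (0::'a)"
    and "CARD('a) = p ^ k"
    and "Fp_adjoin eta = UNIV"
    and "coprime g h"
    and g_fac: "poly_over_Fp g" "g dvd Xn1 n" "neg_var g = g"
    and g_irr: "\<And>r. irreducible_over_Fp r \<Longrightarrow> r dvd Xn1 n \<Longrightarrow> \<not> k dvd degree r \<Longrightarrow> r dvd g"
    and h_fac: "h dvd Xn1 n div g" "neg_var h = h"
    and h_irr: "\<And>r. irreducible r \<Longrightarrow> r dvd Xn1 n div g \<Longrightarrow>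
                  (r dvd h \<longleftrightarrow> \<not> (\<exists>i\<in>{1..<k}. frob p i r dvd h))"
    and "alpha \<in> Fp" "alpha \<noteq> 0"
  shows "(\<exists>!a. degree a < n \<and> g dvd a - 1 \<and>
            (\<forall>i<k. frob p i h dvd a - [:(alpha * eta) ^ (p ^ i):]))
       \<and> (\<forall>a. g dvd a - 1 \<and> (\<forall>i<k. frob p i h dvd a - [:(alpha * eta) ^ (p ^ i):])
              \<longrightarrow> poly_over_Fp (a mod Xn1 n) \<and> totally_isotropic n (neg_subspace n g a))"
proof -
  note pr = assms(1) and ch = assms(8)
  have p0: "p > 0" using pr prime_gt_0_nat by blast
  define M :: "'a poly" where "M = Xn1 n"
  define H where "H i = frob p i h" for i
  define c where "c i = (alpha * eta) ^ (p ^ i)" for i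
  have fer: "x ^ (p ^ k) = x" for x :: 'a by (rule fermat_pow1[OF assms(9)])
  have frk: "frob p k f = f" for f :: "'a poly"
    by (rule poly_eqI) (simp add: frob_coeff[OF pr] fer)
  have frob_inv: "frob p (k - i) (frob p i f) = f" if "i \<le> k" for i and f :: "'a poly"
    using frob_comp[OF pr, of "k - i" i f] that frk by simp
  have frob_addk: "frob p (j + k) f = frob p j f" for j and f :: "'a poly"
    using frob_comp[OF pr, of j k f] frk by simp
  have nn: "of_nat n \<noteq> (0::'a)"
  proof
    assume "of_nat n = (0::'a)"
    hence "p dvd n" using of_nat_eq_0_iff_char_dvd char_eq[OF pr ch] by metis
    hence "p dvd p ^ (k * m) + 1" using assms(6) by (rule dvd_trans)
    moreover have "p dvd p ^ (k * m)" using assms(3,4) by simp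
    ultimately have "p dvd (p ^ (k * m) + 1) - p ^ (k * m)" by (rule dvd_diff_nat)
    hence "p dvd 1" by simp
    thus False using pr by simp
  qed
  have M0: "M \<noteq> 0" unfolding M_def by (rule Xn1_nz[OF assms(5)])
  have sqf: "is_unit x" if "x ^ 2 dvd M" for x
    using squarefreeD[OF Xn1_sqf[OF assms(5) nn] that[unfolded M_def]] .
  have degM: "degree M = n" unfolding M_def by (rule degree_Xn1[OF assms(5)])
  have XM: "M = g * (M div g)" using g_fac(2) unfolding M_def by simp
  have frobM: "frob p i M = M" for i unfolding M_def by (rule Fp_frob[OF pr ch Xn1_over[OF assms(5)]])
  have frobg: "frob p i g = g" for i by (rule Fp_frob[OF pr ch g_fac(1)])
  have hM: "h dvd M" using h_fac(1) g_fac(2) unfolding M_def by (metis dvd_div_mult_self dvd_mult2)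
  have HM: "H i dvd M" for i unfolding H_def using frob_dvd[OF pr ch hM, of i] frobM by simp
  have H0: "H 0 = h" unfolding H_def by (rule frob_0)
  have Mg0: "M div g \<noteq> 0"
  proof
    assume z: "M div g = 0"
    have "M = g * 0" using XM unfolding z .
    with M0 show False by simp
  qed
  have h0: "h \<noteq> 0" using h_fac(1) Mg0 unfolding M_def by auto
  have Hnz: "H i \<noteq> 0" for i
  proof
    assume H0i: "H i = 0"
    have "coeff h j = 0" for j
    proof -
      have "coeff (H i) j = 0" using H0i by simp
      hence "coeff h j ^ (p ^ i) = 0" unfolding H_def frob_coeff[OF pr] .
      thus ?thesis by simp
    qed
    hence "h = 0" by (intro poly_eqI) simp
    with h0 show False ..
  qed

  have KEY: "M dvd F" if F1: "g dvd F" and F2: "\<And>i. i < k \<Longrightarrow> H i dvd F" for F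
  proof (rule sqf_dvd_field[OF M0 sqf])
    fix r :: "'a poly" assume r: "irreducible r" "r dvd M"
    show "r dvd F"
    proof (cases "r dvd g")
      case True thus ?thesis using F1 by (rule dvd_trans)
    next
      case False
      have "r dvd g * (M div g)" using r(2) unfolding XM[symmetric] .
      hence rMg: "r dvd M div g" using irr_prime[OF r(1) _ False] by blast
      have iff: "r dvd h \<longleftrightarrow> \<not> (\<exists>i\<in>{1..<k}. frob p i r dvd h)"
        using h_irr[OF r(1) rMg[unfolded M_def]] .
      show ?thesis
      proof (cases "r dvd h")
        case True thus ?thesis using F2[OF assms(3)] H0 by (metis dvd_trans)
      next
        case nh: False
        then obtain i where i: "i \<in> {1..<k}" "frob p i r dvd h" using iff by blast
        have "frob p (k - i) (frob p i r) dvd frob p (k - i) h" by (rule frob_dvd[OF pr ch i(2)])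
        hence "r dvd H (k - i)" unfolding H_def using frob_inv[of i r] i(1) by simp
        moreover have "H (k - i) dvd F" using F2 i(1) by simp
        ultimately show ?thesis by (rule dvd_trans)
      qed
    qed
  qed
  have c_pow: "c j ^ p = c (Suc j)" for j unfolding c_def by (simp add: power_mult[symmetric] mult.commute)
  have cQ: "c j ^ (p ^ (k * m)) = c j" for j by (rule fermat_pow[OF assms(9)])

  have cop_gH: "coprime g (H i)" for i
  proof -
    obtain s t where "s * g + t * h = 1" using bezout_poly[OF assms(11)] by blast
    hence "frob p i (s * g + t * h) = 1" by (simp add: frob_one)
    hence "frob p i s * g + frob p i t * H i = 1"
      unfolding H_def by (simp add: frob_add[OF pr ch] frob_mult[OF pr ch] frobg)
    thus ?thesis by (rule coprime_bez)
  qed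
  have cop_HH: "coprime (H i) (H j)" if ij: "i < j" "j < k" for i j
  proof (rule coprimeI)
    fix d assume d: "d dvd H i" "d dvd H j"
    show "is_unit d"
    proof (rule ccontr)
      assume nu: "\<not> is_unit d"
      have "d \<noteq> 0" using d(1) Hnz[of i] by auto
      then obtain r where r: "irreducible r" "r dvd d" using irr_factor_exists nu by blast
      define r' where "r' = frob p (k - i) r"
      have r'irr: "irreducible r'" unfolding r'_def using frob_irr[OF pr ch frk _ r(1)] by simp
      have "r' dvd frob p (k - i) (H i)" unfolding r'_def
        by (rule frob_dvd[OF pr ch dvd_trans[OF r(2) d(1)]])
      hence r'h: "r' dvd h" unfolding H_def using frob_inv[of i h] ij by simp
      have "r' dvd frob p (k - i) (H j)" unfolding r'_def
        by (rule frob_dvd[OF pr ch dvd_trans[OF r(2) d(2)]])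
      also have "frob p (k - i) (H j) = H (j - i)"
        unfolding H_def frob_comp[OF pr] using ij frob_addk[of "j - i" h] by (simp add: algebra_simps)
      finally have "frob p (k - (j - i)) r' dvd frob p (k - (j - i)) (H (j - i))"
        by (rule frob_dvd[OF pr ch])
      hence "frob p (k - (j - i)) r' dvd h" unfolding H_def using frob_inv[of "j - i" h] ij by simp
      moreover have "k - (j - i) \<in> {1..<k}" using ij by auto
      moreover have "r' dvd M div g" using r'h h_fac(1) unfolding M_def by (rule dvd_trans)
      ultimately show False using h_irr[OF r'irr, unfolded M_def[symmetric]] r'h by blast
    qed
  qed
  define mo where "mo j = (if j = k then g else H j)" for j
  define ro where "ro j = (if j = k then 1 else [:c j:])" for j
  have "\<exists>x. \<forall>j\<in>{..k}. mo j dvd x - ro j"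
  proof (rule crt)
    fix i j assume ij: "i \<in> {..k}" "j \<in> {..k}" "i \<noteq> j"
    show "coprime (mo i) (mo j)"
    proof (cases "i = k")
      case True
      hence "j < k" using ij by auto
      thus ?thesis using True cop_gH[of j] unfolding mo_def by simp
    next
      case ik: False
      hence ik': "i < k" using ij by auto
      show ?thesis
      proof (cases "j = k")
        case True
        thus ?thesis using ik cop_gH[of i] unfolding mo_def by (simp add: coprime_commute)
      next
        case jk: False
        hence jk': "j < k" using ij by auto
        show ?thesis
        proof (cases "i < j")
          case True thus ?thesis using ik jk cop_HH[OF True jk'] unfolding mo_def by simp
        next
          case False
          hence "j < i" using ij by auto
          from cop_HH[OF this ik'] have "coprime (H i) (H j)" by (simp add: coprime_commute)
          thus ?thesis using ik jk unfolding mo_def by simp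
        qed
      qed
    qed
  qed simp
  then obtain x where x: "\<And>j. j \<le> k \<Longrightarrow> mo j dvd x - ro j" by auto
  define a0 where "a0 = x mod M"
  have moM: "mo j dvd M" for j unfolding mo_def using g_fac(2) HM unfolding M_def by auto
  have a0c: "mo j dvd a0 - ro j" if "j \<le> k" for j
  proof -
    have "a0 - ro j = (x - ro j) - (x div M) * M"
      unfolding a0_def using minus_div_mult_eq_mod[of x M] by (simp add: algebra_simps)
    also have "mo j dvd \<dots>" by (rule dvd_diff[OF x[OF that] dvd_mult[OF moM]])
    finally show ?thesis .
  qed
  have dega0: "degree a0 < n" using degree_mod_less[OF M0, of x] degM assms(5) unfolding a0_def by auto
  have cong_g: "g dvd a0 - 1" using a0c[of k] by (simp add: mo_def ro_def)
  have cong_H: "\<forall>i<k. H i dvd a0 - [:c i:]"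
  proof (intro allI impI)
    fix i assume "i < k"
    thus "H i dvd a0 - [:c i:]" using a0c[of i] by (simp add: mo_def ro_def)
  qed
  have uniq: "a1 = a2" if u1: "degree a1 < n" "g dvd a1 - 1" "\<forall>i<k. H i dvd a1 - [:c i:]"
     and u2: "degree a2 < n" "g dvd a2 - 1" "\<forall>i<k. H i dvd a2 - [:c i:]" for a1 a2
  proof (rule ccontr)
    assume ne: "a1 \<noteq> a2"
    have "M dvd a1 - a2"
    proof (rule KEY)
      show "g dvd a1 - a2" using dvd_diff[OF u1(2) u2(2)] by simp
      show "H i dvd a1 - a2" if "i < k" for i
        using dvd_diff[OF u1(3)[rule_format, OF that] u2(3)[rule_format, OF that]] by simp
    qed
    hence "degree M \<le> degree (a1 - a2)" using ne by (intro dvd_imp_degree_le) auto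
    moreover have "degree (a1 - a2) < n" using degree_diff_le_max[of a1 a2] u1(1) u2(1) by simp
    ultimately show False using degM by simp
  qed
  have part1: "\<exists>!a. degree a < n \<and> g dvd a - 1 \<and> (\<forall>i<k. H i dvd a - [:c i:])"
    using dega0 cong_g cong_H uniq by blast

  have part2: "poly_over_Fp (a mod M) \<and> totally_isotropic n (neg_subspace n g a)"
    if cga: "g dvd a - 1" and cHa: "\<forall>i<k. H i dvd a - [:c i:]" for a
  proof
    show "poly_over_Fp (a mod M)"
    proof -
      have g1: "g dvd frob p 1 a - a"
      proof -
        have "frob p 1 g dvd frob p 1 (a - 1)" by (rule frob_dvd[OF pr ch cga])
        hence "g dvd frob p 1 a - 1" by (simp add: frobg frob_diff[OF pr ch] frob_one)
        from dvd_diff[OF this cga] show ?thesis by simp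
      qed
      have H1: "H i dvd frob p 1 a - a" if i: "i < k" for i
      proof -
        have sh: "H i dvd frob p 1 a - [:c i:]"
        proof (cases i)
          case 0
          have km: "k - 1 < k" using assms(3) by simp
          have "frob p 1 (H (k - 1)) dvd frob p 1 (a - [:c (k - 1):])"
            by (rule frob_dvd[OF pr ch cHa[rule_format, OF km]])
          moreover have "frob p 1 (H (k - 1)) = H 0"
            unfolding H_def frob_comp[OF pr] using assms(3) frk H0[unfolded H_def] by simp
          moreover have "c (k - 1) ^ p = c 0"
            using c_pow[of "k - 1"] assms(3) fer unfolding c_def by simp
          ultimately show ?thesis using 0
            by (simp add: frob_diff[OF pr ch] frob_const[OF pr])
        next
          case (Suc i')
          have "frob p 1 (H i') dvd frob p 1 (a - [:c i':])"
            by (rule frob_dvd[OF pr ch cHa[rule_format]]) (use i Suc in simp)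
          moreover have "frob p 1 (H i') = H i" unfolding H_def frob_comp[OF pr] Suc by simp
          ultimately show ?thesis using Suc c_pow[of i']
            by (simp add: frob_diff[OF pr ch] frob_const[OF pr])
        qed
        from dvd_diff[OF sh cHa[rule_format, OF i]] show ?thesis by simp
      qed
      have Mf: "M dvd frob p 1 a - a" by (rule KEY[OF g1 H1])
      define r where "r = a mod M"
      have degr: "degree r < n" using degree_mod_less[OF M0, of a] degM assms(5) unfolding r_def by auto
      have degfr: "degree (frob p 1 r) < degree M"
        using map_poly_degree_leq[of _ r] degr degM unfolding frob_def by (metis le_less_trans)
      have "frob p 1 a = frob p 1 (a div M * M + r)" unfolding r_def div_mult_mod_eq ..
      also have "\<dots> = frob p 1 (a div M) * frob p 1 M + frob p 1 r"
        by (simp only: frob_add[OF pr ch] frob_mult[OF pr ch])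
      finally have "frob p 1 a = frob p 1 (a div M) * M + frob p 1 r" unfolding frobM .
      hence "frob p 1 a mod M = frob p 1 r"
        using mod_poly_less[OF degfr] by (simp add: poly_mod_add_left)
      moreover have "frob p 1 a mod M = a mod M" using Mf by (simp add: mod_eq_dvd_iff)
      ultimately have fr: "frob p 1 r = r" unfolding r_def by simp
      have "coeff r i \<in> Fp" for i
      proof (rule fixed_Fp[OF pr ch])
        have "coeff (frob p 1 r) i = coeff r i" using fr by simp
        thus "coeff r i ^ p = coeff r i" by (simp add: frob_coeff[OF pr])
      qed
      thus ?thesis unfolding poly_over_Fp_def r_def by blast
    qed
  next
    let ?Y = "[:0,1:] ^ (2 * n - 1) :: 'a poly"
    let ?Q = "p ^ (k * m)"
    have frkm: "frob p (k * m) f = f" for f :: "'a poly"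
      by (rule poly_eqI) (simp add: frob_coeff[OF pr] fermat_pow[OF assms(9)])
    have PC: "M dvd pcompose f ?Y - (neg_var f) ^ ?Q" for f
    proof -
      have "(neg_var f) ^ ?Q = pcompose (neg_var f) (monom 1 ?Q)"
        using freshman_poly[OF pr ch, of "neg_var f" "k * m"] frkm by simp
      also have "\<dots> = pcompose f (pcompose [:0, -1:] (monom 1 ?Q))"
        unfolding neg_var_def by (simp add: pcompose_assoc)
      also have "pcompose [:0, -1:] (monom 1 ?Q) = (- monom 1 ?Q :: 'a poly)" by (rule poly_eqI) (simp add: pcompose_pCons)
      finally have e: "(neg_var f) ^ ?Q = pcompose f (- monom 1 ?Q)" .
      have "M dvd ?Y - (- monom 1 ?Q)" using XQ[OF assms(5,6,7)] unfolding M_def by simp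
      hence "M dvd pcompose f ?Y - pcompose f (- monom 1 ?Q)" by (rule pcompose_cong)
      thus ?thesis unfolding e .
    qed
    define gd where "gd = pcompose g ?Y"
    define ad where "ad = pcompose a ?Y"
    define aQ where "aQ = (neg_var a) ^ ?Q"
    have d1: "M dvd gd - g ^ ?Q" using PC[of g] g_fac(3) unfolding gd_def by simp
    have d2: "M dvd ad - aQ" using PC[of a] unfolding ad_def aQ_def by simp
    have HaQ: "H i dvd a - aQ" if i: "i < k" for i
    proof -
      have hi: "H i dvd a - [:c i:]" using cHa i by blast
      have nH: "neg_var (H i) = H i"
        unfolding H_def using frob_neg_var[OF pr ch, of i h] h_fac(2) by simp
      have "neg_var (H i) dvd neg_var (a - [:c i:])"
        using hi unfolding neg_var_def by (auto elim!: dvdE simp: pcompose_mult)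
      hence "H i dvd neg_var a - [:c i:]" unfolding nH by (simp add: neg_var_def pcompose_diff)
      moreover have "neg_var a - [:c i:] dvd aQ - [:c i:] ^ ?Q" unfolding aQ_def by (rule dvd_pow_diff)
      ultimately have "H i dvd aQ - [:c i:]" using cQ by (simp add: poly_const_pow dvd_trans)
      from dvd_diff[OF hi this] show ?thesis by simp
    qed
    have MF: "M dvd g * g ^ ?Q * (a - aQ)"
    proof (rule KEY)
      show "g dvd g * g ^ ?Q * (a - aQ)" by (simp add: mult.assoc)
      show "H i dvd g * g ^ ?Q * (a - aQ)" if "i < k" for i
        using dvd_mult[OF HaQ[OF that], of "g * g ^ ?Q"] .
    qed
    have "g * gd * (a - ad) = g * g ^ ?Q * (a - aQ) + (g * (a - ad)) * (gd - g ^ ?Q) + (g * g ^ ?Q) * (aQ - ad)"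
      by (simp add: algebra_simps)
    also have "M dvd \<dots>"
      using d2 by (intro dvd_add MF dvd_mult d1) (simp add: dvd_diff_commute)
    finally have MM: "M dvd g * gd * (a - ad)" .
    show "totally_isotropic n (neg_subspace n g a)"
      unfolding totally_isotropic_def neg_subspace_def
    proof (intro ballI)
      fix xx yy assume "xx \<in> {(vecR n (u * g), vecR n (u * a * g)) |u. poly_over_Fp u}"
        "yy \<in> {(vecR n (u * g), vecR n (u * a * g)) |u. poly_over_Fp u}"
      then obtain u v where xy: "xx = (vecR n (u * g), vecR n (u * a * g))"
        "yy = (vecR n (v * g), vecR n (v * a * g))" by blast
      have "symp n xx yy = Bf n (g * u) (v * a * g) - Bf n ((a * g) * u) (v * g)"
        unfolding xy symp_def vecR_def Bf_def by (simp add: mult_ac)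
      also have "Bf n (g * u) (v * a * g) = Bf n u (gd * (v * a * g))"
        unfolding gd_def by (rule Bf_adj[OF assms(5)])
      also have "Bf n ((a * g) * u) (v * g) = Bf n u (ad * gd * (v * g))"
        unfolding gd_def ad_def by (simp add: Bf_adj[OF assms(5)] pcompose_mult)
      also have "Bf n u (gd * (v * a * g)) = Bf n u (ad * gd * (v * g))"
      proof (rule Bf_cong_right)
        have "gd * (v * a * g) - ad * gd * (v * g) = v * (g * gd * (a - ad))" by (simp add: algebra_simps)
        thus "Xn1 n dvd gd * (v * a * g) - ad * gd * (v * g)" using dvd_mult[OF MM, of v] unfolding M_def by simp
      qed
      finally show "symp n xx yy = 0" by simp
    qed
  qed
  show ?thesis
    using part1 part2 unfolding H_def c_def M_def by blast
qed


end
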